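(* Let $n\ge3$ and $r\in[3,n]$, and suppose $\tilde{\mathfrak b}_r=\mathfrak a\cdot\mathfrak b$ with $\mathfrak a,\mathfrak b\in\mathrm{Mon}(R)\setminus\{R\}$; let $\alpha=\operatorname{mdeg}(\mathfrak a)$, $\beta=\operatorname{mdeg}(\mathfrak b)$. Then: (1) $\alpha,\beta\ge1$ and $\alpha+\beta=a_{\{1\}\cup[3,r]}$; (2) $X^\alpha,Y^\alpha\in G(\mathfrak a)$ and $X^\beta,Y^\beta\in G(\mathfrak b)$; (3) $\alpha=a_{I_1}$ and $\beta=a_{I_2}$ for some $I_1,I_2\subseteq\{1\}\cup[3,r]$ with $I_1\cap I_2=\emptyset$.
   Context: Let $K$ be a field, $N\ge2$, $R=K[X_1,\dots,X_N]$, $X=X_1$, $Y=X_2$. $\mathrm{Mon}(R)$ is the monoid of nonzero monomial ideals of $R$ under ideal multiplication, with identity $R$. For a nonzero ideal $J$, $\operatorname{mdeg}(J)$ is the least $t$ such that $J$ contains a polynomial whose nonzero homogeneous component of smallest degree has degree $t$. For $J\in\mathrm{Mon}(R)$, $G(J)$ denotes the unique set of monomial generators of $J$ that is minimal with respect to divisibility. $[x,y]=\{z\in\mathbb Z:x\le z\le y\}$. For $i\in\mathbb N^+$, $\mathfrak b_i=\langle X^i,Y^i\rangle$. Fix an integer $n\ge 3$ and positive integers $a_1,\dots,a_{n+1}$ with (C1) $a_{n+1}=a_1+\dots+a_{n-1}+2a_n$ and (C2) $a_{i+1}>2(a_1+\dots+a_i)$ for all $i\in[1,n-1]$. For $I\subseteq[1,n+1]$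 put $a_I=\sum_{i\in I}a_i$ ($a_\emptyset=0$). For $r\in[3,n]$, $\tilde{\mathfrak b}_r$ is the ideal generated by $\mathfrak b_{a_1}\mathfrak b_{a_3}\mathfrak b_{a_4}\cdots\mathfrak b_{a_r}$ together with the monomial $X^{a_{[3,r]}-a_2}Y^{a_3-a_2}$. *)

theory Defs
  imports Main
begin

(* Monomial ideals of R = K[X_1,...,X_N] are modelled by their sets of monomials.
   A monomial X_1^{e 1} ... X_N^{e N} is its exponent vector e :: nat => nat,
   with e i = 0 for i outside {1..N}.  Functions are ordered pointwise, so
   e \<le> f  means  X^e divides X^f; \<lambda>i. e i + f i is the exponent of the product. *)

type_synonym expo = "nat \<Rightarrow> nat"

definition monoms :: "nat \<Rightarrow> expo set" where
  "monoms N = {e. \<forall>i. i \<notin> {1..N} \<longrightarrow> e i = 0}"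

definition gen :: "nat \<Rightarrow> expo set \<Rightarrow> expo set" where
  "gen N S = {f \<in> monoms N. \<exists>e\<in>S. e \<le> f}"

definition Mon :: "nat \<Rightarrow> expo set set" where
  "Mon N = {M. M \<noteq> {} \<and> M \<subseteq> monoms N \<and> (\<forall>e\<in>M. \<forall>f\<in>monoms N. e \<le> f \<longrightarrow> f \<in> M)}"

definition idmult :: "nat \<Rightarrow> expo set \<Rightarrow> expo set \<Rightarrow> expo set" where
  "idmult N A B = gen N {(\<lambda>i. e i + f i) | e f. e \<in> A \<and> f \<in> B}"

definition tdeg :: "nat \<Rightarrow> expo \<Rightarrow> nat" where
  "tdeg N e = sum e {1..N}"

(* mdeg of a monomial ideal: the least degree of a lowest homogeneous component of an
   element; for a monomial ideal this is the least degree of a monomial in it *)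
definition mdeg :: "nat \<Rightarrow> expo set \<Rightarrow> nat" where
  "mdeg N A = (LEAST t. \<exists>e\<in>A. tdeg N e = t)"

definition mingens :: "expo set \<Rightarrow> expo set" where
  "mingens A = {e \<in> A. \<forall>f\<in>A. f \<le> e \<longrightarrow> f = e}"

(* the monomial X^p Y^q with X = X_1, Y = X_2 *)
definition mXY :: "nat \<Rightarrow> nat \<Rightarrow> expo" where
  "mXY p q = (\<lambda>j. if j = 1 then p else if j = 2 then q else 0)"

definition bid :: "nat \<Rightarrow> nat \<Rightarrow> expo set" where
  "bid N i = gen N {mXY i 0, mXY 0 i}"

definition btilde :: "nat \<Rightarrow> (nat \<Rightarrow> nat) \<Rightarrow> nat \<Rightarrow> expo set" where
  "btilde N a r =
     gen N (foldr (\<lambda>i acc. idmult N (bid N (a i)) acc) (1 # [3..<r+1]) (monoms N)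
            \<union> {mXY (sum a {3..r} - a 2) (a 3 - a 2)})"

end

theory Submission
  imports Defs
begin

lemma mXY_monoms: "N \<ge> 2 \<Longrightarrow> mXY p q \<in> monoms N"
  unfolding monoms_def mXY_def by auto

lemma gen_self: "e \<in> S \<Longrightarrow> e \<in> monoms N \<Longrightarrow> e \<in> gen N S"
  unfolding gen_def by auto

lemma mXY_add: "(\<lambda>i. mXY p q i + mXY p' q' i) = mXY (p+p') (q+q')"
  unfolding mXY_def by auto

lemma mXY_12[simp]: "mXY p q 1 = p" "mXY p q 2 = q"
  unfolding mXY_def by auto

lemma idmult_intro: "e \<in> A \<Longrightarrow> f \<in> B \<Longrightarrow> (\<lambda>i. e i + f i) \<in> monoms N \<Longrightarrow> (\<lambda>i. e i + f i) \<in> idmult N A B"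
  unfolding idmult_def gen_def by blast

lemma mXY_Suc0[simp]: "mXY p q (Suc 0) = p"
  unfolding mXY_def by auto

lemma prod_char:
  assumes "distinct L" "g \<in> foldr (\<lambda>i acc. idmult N (bid N (a i)) acc) L (monoms N)"
  shows "\<exists>I \<subseteq> set L. sum a I \<le> g 1 \<and> sum a (set L - I) \<le> g 2"
  using assms
proof (induction L arbitrary: g)
  case Nil
  then show ?case by auto
next
  case (Cons i L)
  from Cons.prems(2) have "g \<in> idmult N (bid N (a i)) (foldr (\<lambda>i acc. idmult N (bid N (a i)) acc) L (monoms N))"
    by simp
  then obtain e f where e: "e \<in> bid N (a i)" and f: "f \<in> foldr (\<lambda>i acc. idmult N (bid N (a i)) acc) L (monoms N)"
    and le: "(\<lambda>j. e j + f j) \<le> g"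
    unfolding idmult_def gen_def by blast
  from e obtain h where h: "h \<in> {mXY (a i) 0, mXY 0 (a i)}" "h \<le> e"
    unfolding bid_def gen_def by blast
  from Cons.IH[OF _ f] Cons.prems(1) obtain I where I: "I \<subseteq> set L" "sum a I \<le> f 1" "sum a (set L - I) \<le> f 2"
    by auto
  have g1: "e 1 + f 1 \<le> g 1" and g2: "e 2 + f 2 \<le> g 2" using le by (auto simp: le_fun_def)
  have iL: "i \<notin> set L" using Cons.prems(1) by simp
  have fin: "finite (set L)" by simp
  show ?case
  proof (cases "h = mXY (a i) 0")
    case True
    then have "a i \<le> e 1" using h(2) by (metis le_funD mXY_12(1))
    moreover have "i \<notin> I" using I(1) iL by auto
    moreover have "finite I" using I(1) fin finite_subset by blast
    moreover have "set (i # L) - insert i I = set L - I" using iL I(1) by auto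
    ultimately have "sum a (insert i I) \<le> g 1" "sum a (set (i # L) - insert i I) \<le> g 2"
      using I g1 g2 by auto
    moreover have "insert i I \<subseteq> set (i # L)" using I(1) by auto
    ultimately show ?thesis by blast
  next
    case False
    then have "h = mXY 0 (a i)" using h(1) by auto
    then have "a i \<le> e 2" using h(2) by (metis le_funD mXY_12(2))
    moreover have "set (i # L) - I = insert i (set L - I)" using I(1) iL by auto
    moreover have "i \<notin> set L - I" using iL by auto
    ultimately show ?thesis using I g1 g2 fin iL
      by (intro exI[of _ I]) auto
  qed
qed

lemma prod_XY:
  assumes "N \<ge> 2" "distinct L"
  shows "mXY (sum a (set L)) 0 \<in> foldr (\<lambda>i acc. idmult N (bid N (a i)) acc) L (monoms N)
       \<and> mXY 0 (sum a (set L)) \<in> foldr (\<lambda>i acc. idmult N (bid N (a i)) acc) L (monoms N)"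
  using assms(2)
proof (induction L)
  case Nil
  then show ?case using mXY_monoms[OF assms(1)] by simp
next
  case (Cons i L)
  let ?F = "foldr (\<lambda>i acc. idmult N (bid N (a i)) acc) L (monoms N)"
  have s: "sum a (set (i#L)) = a i + sum a (set L)" using Cons.prems by simp
  have bX: "mXY (a i) 0 \<in> bid N (a i)" and bY: "mXY 0 (a i) \<in> bid N (a i)"
    unfolding bid_def by (auto intro!: gen_self mXY_monoms assms(1))
  from Cons have IH: "mXY (sum a (set L)) 0 \<in> ?F" "mXY 0 (sum a (set L)) \<in> ?F" by auto
  have "mXY (a i + sum a (set L)) 0 \<in> idmult N (bid N (a i)) ?F"
    using idmult_intro[OF bX IH(1)] mXY_add[of "a i" 0 "sum a (set L)" 0] mXY_monoms[OF assms(1)] by simp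
  moreover have "mXY 0 (a i + sum a (set L)) \<in> idmult N (bid N (a i)) ?F"
    using idmult_intro[OF bY IH(2)] mXY_add[of 0 "a i" 0 "sum a (set L)"] mXY_monoms[OF assms(1)] by simp
  ultimately show ?case using s by simp
qed

lemma tdeg_split: "N \<ge> 2 \<Longrightarrow> tdeg N e = e 1 + e 2 + sum e {3..N}"
proof -
  assume N: "N \<ge> 2"
  have "{1..N} = {1,2} \<union> {3..N}" using N by auto
  then show ?thesis unfolding tdeg_def by (simp add: sum.union_disjoint)
qed

lemma tdeg_mXY: "N \<ge> 2 \<Longrightarrow> tdeg N (mXY p q) = p + q"
  by (simp add: tdeg_split, simp add: mXY_def)

lemma side:
  assumes N: "N \<ge> 2" and A: "A \<in> Mon N"
    and pA: "mXY p 0 \<in> A" "mXY 0 p \<in> A" and cB: "mXY c 0 \<in> B" "mXY 0 c \<in> B"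
    and hJ: "\<forall>e\<in>A. \<forall>f\<in>B. (\<lambda>i. e i + f i) \<in> J"
    and F: "\<forall>g\<in>J. D \<le> g 1 + g 2 \<or> (u \<le> g 1 \<and> v \<le> g 2)"
    and uv: "D < u + v" and pc: "p + c = D"
  shows "mdeg N A = p \<and> mXY p 0 \<in> mingens A \<and> mXY 0 p \<in> mingens A"
proof -
  have low: "p \<le> e 1 + e 2" if e: "e \<in> A" for e
  proof -
    have j1: "(\<lambda>i. e i + mXY 0 c i) \<in> J" using hJ e cB(2) by blast
    have j2: "(\<lambda>i. e i + mXY c 0 i) \<in> J" using hJ e cB(1) by blast
    have "D \<le> e 1 + (e 2 + c) \<or> (u \<le> e 1 \<and> v \<le> e 2 + c)"
      using F[rule_format, OF j1] by (simp add: mXY_def)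
    moreover have "D \<le> (e 1 + c) + e 2 \<or> (u \<le> e 1 + c \<and> v \<le> e 2)"
      using F[rule_format, OF j2] by (simp add: mXY_def)
    ultimately show ?thesis using uv pc by linarith
  qed
  have lowt: "p \<le> tdeg N e" if e: "e \<in> A" for e
    using low[OF e] tdeg_split[OF N, of e] by linarith
  have "mdeg N A = p" unfolding mdeg_def
  proof (rule Least_equality)
    show "\<exists>e\<in>A. tdeg N e = p" using pA(1) tdeg_mXY[OF N, of p 0] by auto
    show "\<And>y. \<exists>e\<in>A. tdeg N e = y \<Longrightarrow> p \<le> y" using lowt by auto
  qed
  moreover have "mXY p 0 \<in> mingens A"
    unfolding mingens_def
  proof (intro CollectI conjI ballI impI pA(1))
    fix f assume f: "f \<in> A" "f \<le> mXY p 0"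
    have le: "f j \<le> mXY p 0 j" for j using f(2) by (simp add: le_fun_def)
    have z: "mXY p 0 j = 0" if "j \<noteq> 1" "j \<noteq> 2" for j using that by (simp add: mXY_def)
    have fz: "f j \<le> 0" if "j \<noteq> 1" "j \<noteq> 2" for j using le[of j] z[OF that] by simp
    from le have "f 1 \<le> p" "f 2 \<le> 0" "\<And>j. j \<noteq> 1 \<Longrightarrow> j \<noteq> 2 \<Longrightarrow> f j \<le> 0"
      using le[of 1] le[of 2] fz by auto
    moreover have "p \<le> f 1 + f 2" using low[OF f(1)] .
    ultimately have h: "f 1 = mXY p 0 1" "f 2 = mXY p 0 2" "\<And>j. j \<noteq> 1 \<Longrightarrow> j \<noteq> 2 \<Longrightarrow> f j = mXY p 0 j"
      by (auto simp: mXY_def)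
    show "f = mXY p 0"
    proof
      fix j show "f j = mXY p 0 j" using h by (cases "j = 1"; cases "j = 2") auto
    qed
  qed
  moreover have "mXY 0 p \<in> mingens A"
    unfolding mingens_def
  proof (intro CollectI conjI ballI impI pA(2))
    fix f assume f: "f \<in> A" "f \<le> mXY 0 p"
    have le: "f j \<le> mXY 0 p j" for j using f(2) by (simp add: le_fun_def)
    have z: "mXY 0 p j = 0" if "j \<noteq> 1" "j \<noteq> 2" for j using that by (simp add: mXY_def)
    have fz: "f j \<le> 0" if "j \<noteq> 1" "j \<noteq> 2" for j using le[of j] z[OF that] by simp
    from le have "f 2 \<le> p" "f 1 \<le> 0" "\<And>j. j \<noteq> 1 \<Longrightarrow> j \<noteq> 2 \<Longrightarrow> f j \<le> 0"
      using le[of 1] le[of 2] fz by auto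
    moreover have "p \<le> f 1 + f 2" using low[OF f(1)] .
    ultimately have h: "f 1 = mXY 0 p 1" "f 2 = mXY 0 p 2" "\<And>j. j \<noteq> 1 \<Longrightarrow> j \<noteq> 2 \<Longrightarrow> f j = mXY 0 p j"
      by (auto simp: mXY_def)
    show "f = mXY 0 p"
    proof
      fix j show "f j = mXY 0 p j" using h by (cases "j = 1"; cases "j = 2") auto
    qed
  qed
  ultimately show ?thesis by blast
qed

lemma split_X: "(\<lambda>i. e i + f i) \<le> mXY D 0 \<Longrightarrow> e = mXY (e 1) 0 \<and> f = mXY (f 1) 0 \<and> e 1 + f 1 \<le> D"
proof -
  assume h: "(\<lambda>i. e i + f i) \<le> mXY D 0"
  have le: "e j + f j \<le> mXY D 0 j" for j using h by (simp add: le_fun_def)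
  have "e j = mXY (e 1) 0 j \<and> f j = mXY (f 1) 0 j" for j
    using le[of j] by (cases "j = 1"; cases "j = 2") (auto simp: mXY_def)
  then have E: "\<forall>j. e j = mXY (e 1) 0 j \<and> f j = mXY (f 1) 0 j" by blast
  have "e = mXY (e 1) 0" by (rule ext) (use E in blast)
  moreover have "f = mXY (f 1) 0" by (rule ext) (use E in blast)
  moreover have "e 1 + f 1 \<le> D" using le[of 1] by simp
  ultimately show ?thesis by blast
qed

lemma split_Y: "(\<lambda>i. e i + f i) \<le> mXY 0 D \<Longrightarrow> e = mXY 0 (e 2) \<and> f = mXY 0 (f 2) \<and> e 2 + f 2 \<le> D"
proof -
  assume h: "(\<lambda>i. e i + f i) \<le> mXY 0 D"
  have le: "e j + f j \<le> mXY 0 D j" for j using h by (simp add: le_fun_def)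
  have "e j = mXY 0 (e 2) j \<and> f j = mXY 0 (f 2) j" for j
    using le[of j] by (cases "j = 1"; cases "j = 2") (auto simp: mXY_def)
  then have E: "\<forall>j. e j = mXY 0 (e 2) j \<and> f j = mXY 0 (f 2) j" by blast
  have "e = mXY 0 (e 2)" by (rule ext) (use E in blast)
  moreover have "f = mXY 0 (f 2)" by (rule ext) (use E in blast)
  moreover have "e 2 + f 2 \<le> D" using le[of 2] by simp
  ultimately show ?thesis by blast
qed

lemma idmult_mem: "A \<in> Mon N \<Longrightarrow> B \<in> Mon N \<Longrightarrow> e \<in> A \<Longrightarrow> f \<in> B \<Longrightarrow> (\<lambda>i. e i + f i) \<in> idmult N A B"
  apply (rule idmult_intro, assumption, assumption)
  unfolding Mon_def monoms_def by auto

lemma idmult_elim: "g \<in> idmult N A B \<Longrightarrow> \<exists>e\<in>A. \<exists>f\<in>B. (\<lambda>i. e i + f i) \<le> g"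
  unfolding idmult_def gen_def by blast

lemma proper_pos: "A \<in> Mon N \<Longrightarrow> A \<noteq> monoms N \<Longrightarrow> mXY 0 0 \<notin> A"
proof
  assume A: "A \<in> Mon N" "A \<noteq> monoms N" "mXY 0 0 \<in> A"
  have z: "mXY 0 0 \<le> g" for g by (simp add: le_fun_def mXY_def)
  have "monoms N \<subseteq> A" using A(1,3) z unfolding Mon_def by blast
  moreover have "A \<subseteq> monoms N" using A(1) unfolding Mon_def by blast
  ultimately show False using A(2) by blast
qed

theorem lemma4p12:
  fixes N n r :: nat and a :: "nat \<Rightarrow> nat" and A B :: "expo set"
  assumes "N \<ge> 2" and "n \<ge> 3"
    and "\<forall>i\<in>{1..n+1}. a i > 0"
    and C1: "a (n+1) = sum a {1..n-1} + 2 * a n"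
    and C2: "\<forall>i\<in>{1..n-1}. a (i+1) > 2 * sum a {1..i}"
    and "r \<in> {3..n}"
    and "A \<in> Mon N" and "B \<in> Mon N" and "A \<noteq> monoms N" and "B \<noteq> monoms N"
    and "btilde N a r = idmult N A B"
  shows "mdeg N A \<ge> 1 \<and> mdeg N B \<ge> 1 \<and> mdeg N A + mdeg N B = sum a ({1} \<union> {3..r})
    \<and> mXY (mdeg N A) 0 \<in> mingens A \<and> mXY 0 (mdeg N A) \<in> mingens A
    \<and> mXY (mdeg N B) 0 \<in> mingens B \<and> mXY 0 (mdeg N B) \<in> mingens B
    \<and> (\<exists>I1 I2. I1 \<subseteq> {1} \<union> {3..r} \<and> I2 \<subseteq> {1} \<union> {3..r} \<and> I1 \<inter> I2 = {}
          \<and> mdeg N A = sum a I1 \<and> mdeg N B = sum a I2)"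
proof -
  note N = assms(1)
  note AM = assms(7) and BM = assms(8)
  define S where "S = {1} \<union> {3..r}"
  define D where "D = sum a S"
  define u where "u = sum a {3..r} - a 2"
  define v where "v = a 3 - a 2"
  define L where "L = 1 # [3..<r+1]"
  define P where "P = foldr (\<lambda>i acc. idmult N (bid N (a i)) acc) L (monoms N)"
  define J where "J = btilde N a r"
  have r3: "3 \<le> r" "r \<le> n" using assms(6) by auto
  have setL: "set L = S" unfolding L_def S_def by auto
  have distL: "distinct L" unfolding L_def by auto
  have finS: "finite S" unfolding S_def by auto
  have J_def': "J = gen N (P \<union> {mXY u v})"
    unfolding J_def btilde_def P_def L_def u_def v_def by simp
  have Fsum: "sum a I + sum a (S - I) = D" if "I \<subseteq> S" for I
    using sum.subset_diff[OF that finS, of a] unfolding D_def by simp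
  have F1: "(\<exists>I\<subseteq>S. sum a I \<le> g 1 \<and> sum a (S - I) \<le> g 2) \<or> (u \<le> g 1 \<and> v \<le> g 2)"
    if g: "g \<in> J" for g
  proof -
    from g obtain h where h: "h \<in> P \<union> {mXY u v}" "h \<le> g" unfolding J_def' gen_def by blast
    have h12: "h 1 \<le> g 1" "h 2 \<le> g 2" using h(2) by (auto simp: le_fun_def)
    show ?thesis
    proof (cases "h \<in> P")
      case True
      from prod_char[OF distL True[unfolded P_def]] obtain I where
        "I \<subseteq> S" "sum a I \<le> h 1" "sum a (S - I) \<le> h 2" using setL by auto
      then show ?thesis using h12 by auto
    next
      case False
      then have "h = mXY u v" using h(1) by auto
      then show ?thesis using h12 by simp
    qed
  qed
  have F: "D \<le> g 1 + g 2 \<or> (u \<le> g 1 \<and> v \<le> g 2)" if g: "g \<in> J" for g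
    using F1[OF g]
  proof
    assume "\<exists>I\<subseteq>S. sum a I \<le> g 1 \<and> sum a (S - I) \<le> g 2"
    then obtain I where I: "I \<subseteq> S" "sum a I \<le> g 1" "sum a (S - I) \<le> g 2" by blast
    have "sum a I + sum a (S - I) = D" using Fsum[OF I(1)] .
    then have "D \<le> g 1 + g 2" using I(2,3) by linarith
    then show ?thesis ..
  next
    assume "u \<le> g 1 \<and> v \<le> g 2" then show ?thesis ..
  qed
  have Fall: "\<forall>g\<in>J. D \<le> g 1 + g 2 \<or> (u \<le> g 1 \<and> v \<le> g 2)" using F by blast
  have "2 \<in> {1..n-1}" using assms(2) by auto
  then have "a (2+1) > 2 * sum a {1..2}" using C2 by blast
  then have a3: "a 3 > 2 * sum a {1..2}" by (simp add: numeral_3_eq_3)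
  have s12: "sum a {1..2::nat} = a 1 + a 2" by (simp add: numeral_2_eq_2)
  have a3le: "a 3 \<le> sum a {3..r}" using r3 by (intro member_le_sum) auto
  have DS: "D = a 1 + sum a {3..r}" unfolding D_def S_def by simp
  have uv: "D < u + v" using a3 s12 a3le DS unfolding u_def v_def by linarith
  have XD: "mXY D 0 \<in> J" "mXY 0 D \<in> J"
    using prod_XY[OF N distL, of a] setL mXY_monoms[OF N] unfolding J_def' P_def D_def
    by (auto intro!: gen_self)
  have JAB: "J = idmult N A B" using assms(11) J_def by simp
  from XD(1) JAB obtain e f where ef: "e \<in> A" "f \<in> B" "(\<lambda>i. e i + f i) \<le> mXY D 0"
    using idmult_elim by blast
  define p1 where "p1 = e 1"
  define p2 where "p2 = f 1"
  have sx: "e = mXY p1 0" "f = mXY p2 0" "p1 + p2 \<le> D"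
    using split_X[OF ef(3)] unfolding p1_def p2_def by blast+
  have p: "mXY p1 0 \<in> A" "mXY p2 0 \<in> B" "p1 + p2 \<le> D"
    using ef(1,2) sx by (metis, metis, metis)
  from XD(2) JAB obtain e' f' where ef': "e' \<in> A" "f' \<in> B" "(\<lambda>i. e' i + f' i) \<le> mXY 0 D"
    using idmult_elim by blast
  define q1 where "q1 = e' 2"
  define q2 where "q2 = f' 2"
  have sy: "e' = mXY 0 q1" "f' = mXY 0 q2" "q1 + q2 \<le> D"
    using split_Y[OF ef'(3)] unfolding q1_def q2_def by blast+
  have q: "mXY 0 q1 \<in> A" "mXY 0 q2 \<in> B" "q1 + q2 \<le> D"
    using ef'(1,2) sy by (metis, metis, metis)
  have hJ: "\<forall>e\<in>A. \<forall>f\<in>B. (\<lambda>i. e i + f i) \<in> J"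
    using idmult_mem[OF AM BM] JAB by auto
  have hJ': "\<forall>e\<in>B. \<forall>f\<in>A. (\<lambda>i. e i + f i) \<in> J"
  proof (intro ballI)
    fix e f assume "e \<in> B" "f \<in> A"
    then have "(\<lambda>i. f i + e i) \<in> J" using hJ by blast
    then show "(\<lambda>i. e i + f i) \<in> J" by (simp add: add.commute)
  qed
  have m1: "mXY p1 q2 \<in> J" using hJ p(1) q(2) mXY_add[of p1 0 0 q2] by force
  have m2: "mXY p2 q1 \<in> J" using hJ q(1) p(2) mXY_add[of 0 q1 p2 0] by force
  have "p2 + q1 \<ge> D" using F[OF m2] uv by auto
  then have "\<not> (u \<le> p1 \<and> v \<le> q2)" using p(3) q(3) uv by linarith
  then obtain I where I: "I \<subseteq> S" "sum a I \<le> p1" "sum a (S - I) \<le> q2"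
    using F1[OF m1] by auto
  have eqs: "p1 = sum a I" "q2 = sum a (S - I)" "q1 = p1" "p2 = q2"
    using Fsum[OF I(1)] I p(3) q(3) \<open>p2 + q1 \<ge> D\<close> by linarith+
  have sA: "mdeg N A = p1 \<and> mXY p1 0 \<in> mingens A \<and> mXY 0 p1 \<in> mingens A"
    by (rule side[OF N AM p(1) _ p(2) _ hJ Fall uv]) (use q eqs Fsum[OF I(1)] in auto)
  have sB: "mdeg N B = p2 \<and> mXY p2 0 \<in> mingens B \<and> mXY 0 p2 \<in> mingens B"
    by (rule side[OF N BM p(2) _ p(1) _ hJ' Fall uv]) (use q eqs Fsum[OF I(1)] in auto)
  have pos1: "p1 \<noteq> 0"
  proof
    assume "p1 = 0" then show False using proper_pos[OF AM assms(9)] p(1) by simp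
  qed
  have pos2: "p2 \<noteq> 0"
  proof
    assume "p2 = 0" then show False using proper_pos[OF BM assms(10)] p(2) by simp
  qed
  have "p1 + p2 = D" using Fsum[OF I(1)] eqs by linarith
  then have sumD: "p1 + p2 = sum a ({1} \<union> {3..r})" unfolding D_def S_def .
  have mA: "mdeg N A = p1" and mB: "mdeg N B = p2" using sA sB by blast+
  have ex: "\<exists>I1 I2. I1 \<subseteq> {1} \<union> {3..r} \<and> I2 \<subseteq> {1} \<union> {3..r} \<and> I1 \<inter> I2 = {}
          \<and> mdeg N A = sum a I1 \<and> mdeg N B = sum a I2"
  proof (intro exI conjI)
    show "I \<subseteq> {1} \<union> {3..r}" using I(1) unfolding S_def .
    show "S - I \<subseteq> {1} \<union> {3..r}" unfolding S_def by blast
    show "I \<inter> (S - I) = {}" by blast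
    show "mdeg N A = sum a I" using mA eqs(1) by simp
    show "mdeg N B = sum a (S - I)" using mB eqs(2,4) by simp
  qed
  have g1: "mXY p1 0 \<in> mingens A" "mXY 0 p1 \<in> mingens A" using sA by blast+
  have g2: "mXY p2 0 \<in> mingens B" "mXY 0 p2 \<in> mingens B" using sB by blast+
  have "1 \<le> p1" "1 \<le> p2" using pos1 pos2 by linarith+
  then show ?thesis unfolding mA mB using g1 g2 sumD ex[unfolded mA mB] by (intro conjI)
qed

end
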